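(* Let $k\ge 2$ and let $G$ be a graph admitting an acyclic $k$-coloring. Then $\chi_s(G)\le k\cdot 2^{k-2}$.
   Context: An acyclic $k$-coloring of a graph is a proper vertex coloring with $k$ colors in which every cycle receives at least three colors (any two color classes induce a forest). A signified graph $(G,\Sigma)$ is a graph $G$ with a set $\Sigma\subseteq E(G)$ of negative edges, other edges positive. Resigning $X\subseteq V(G)$ changes the sign of exactly the edges with one endpoint in $X$; two signified graphs on $G$ are equivalent if one is obtained from the other by resigning. A signified homomorphism is a vertex map sending each edge to an edge of the same sign; a signed homomorphism of $(G,\Sigma)$ to $(H,\Lambda)$ is a signified homomorphism between some signified graphs equivalent to $(G,\Sigma)$ and $(H,\Lambda)$. $\chi_s(G,\Sigma)$ is the minimum number of vertices of a signified graph to which $(G,\Sigma)$ admits a signed homomorphism, and $\chi_s(G)=\max_{\Sigma\subseteq E(G)}\chi_s(G,\Sigma)$. *)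

theory Defs
  imports Main
begin

definition graph :: "'a set \<Rightarrow> 'a set set \<Rightarrow> bool" where
  "graph V E \<longleftrightarrow> finite V \<and> (\<forall>e\<in>E. \<exists>u v. e = {u, v} \<and> u \<noteq> v \<and> u \<in> V \<and> v \<in> V)"

definition is_cycle :: "'a set \<Rightarrow> 'a set set \<Rightarrow> 'a list \<Rightarrow> bool" where
  "is_cycle V E cs \<longleftrightarrow> length cs \<ge> 3 \<and> distinct cs \<and> set cs \<subseteq> V \<and>
     (\<forall>i < length cs. {cs ! i, cs ! ((i + 1) mod length cs)} \<in> E)"

definition acyclic_coloring :: "'a set \<Rightarrow> 'a set set \<Rightarrow> nat \<Rightarrow> ('a \<Rightarrow> nat) \<Rightarrow> bool" where
  "acyclic_coloring V E k c \<longleftrightarrow>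
     (\<forall>v\<in>V. c v < k) \<and>
     (\<forall>u v. {u, v} \<in> E \<longrightarrow> c u \<noteq> c v) \<and>
     (\<forall>cs. is_cycle V E cs \<longrightarrow> card (c ` set cs) \<ge> 3)"

definition resign :: "'a set set \<Rightarrow> 'a set set \<Rightarrow> 'a set \<Rightarrow> 'a set set" where
  "resign E \<Sigma> X = (let S = {e\<in>E. card (e \<inter> X) = 1} in (\<Sigma> - S) \<union> (S - \<Sigma>))"

definition sig_equiv :: "'a set \<Rightarrow> 'a set set \<Rightarrow> 'a set set \<Rightarrow> 'a set set \<Rightarrow> bool" where
  "sig_equiv V E \<Sigma> \<Sigma>' \<longleftrightarrow> (\<exists>X. X \<subseteq> V \<and> \<Sigma>' = resign E \<Sigma> X)"

definition signified_hom ::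
  "'a set \<Rightarrow> 'a set set \<Rightarrow> 'a set set \<Rightarrow> 'b set \<Rightarrow> 'b set set \<Rightarrow> 'b set set \<Rightarrow> ('a \<Rightarrow> 'b) \<Rightarrow> bool" where
  "signified_hom VG EG SG VH EH SH f \<longleftrightarrow>
     (\<forall>v\<in>VG. f v \<in> VH) \<and>
     (\<forall>u v. {u, v} \<in> EG \<longrightarrow> {f u, f v} \<in> EH \<and> ({u, v} \<in> SG \<longleftrightarrow> {f u, f v} \<in> SH))"

definition signed_hom ::
  "'a set \<Rightarrow> 'a set set \<Rightarrow> 'a set set \<Rightarrow> 'b set \<Rightarrow> 'b set set \<Rightarrow> 'b set set \<Rightarrow> bool" where
  "signed_hom VG EG SG VH EH SH \<longleftrightarrow>
     (\<exists>SG' SH' f. sig_equiv VG EG SG SG' \<and> sig_equiv VH EH SH SH' \<and>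
        signified_hom VG EG SG' VH EH SH' f)"

(* chi_s(G,Sigma): least order of a signified (finite simple) graph receiving a signed
   homomorphism; target vertices are taken in nat (any finite graph can be relabelled). *)
definition chi_s_sig :: "'a set \<Rightarrow> 'a set set \<Rightarrow> 'a set set \<Rightarrow> nat" where
  "chi_s_sig V E \<Sigma> = (LEAST n. \<exists>(VH :: nat set) EH SH.
       graph VH EH \<and> SH \<subseteq> EH \<and> card VH = n \<and> signed_hom V E \<Sigma> VH EH SH)"

definition chi_s :: "'a set \<Rightarrow> 'a set set \<Rightarrow> nat" where
  "chi_s V E = Max {chi_s_sig V E \<Sigma> | \<Sigma>. \<Sigma> \<subseteq> E}"

end

theory Submission imports Defs begin

definition acyc :: "'a set set \<Rightarrow> bool" where
  "acyc F \<longleftrightarrow> \<not>(\<exists>cs. length cs \<ge> 3 \<and> distinct cs \<and>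
      (\<forall>i<length cs. {cs!i, cs!((i+1) mod length cs)} \<in> F))"

lemma succ_nth: "successively P xs \<Longrightarrow> Suc i < length xs \<Longrightarrow> P (xs!i) (xs!Suc i)"
proof (induction P xs arbitrary: i rule: successively.induct)
  case (3 P x y xs)
  then show ?case by (cases i) auto
qed auto

lemma path_exists:
  assumes "(\<lambda>a b. {a,b} \<in> F)\<^sup>*\<^sup>* u v"
  shows "\<exists>xs. xs \<noteq> [] \<and> hd xs = u \<and> last xs = v \<and> distinct xs \<and> successively (\<lambda>a b. {a,b}\<in>F) xs"
  using assms
proof (induction rule: rtranclp_induct)
  case base
  then show ?case by (intro exI[of _ "[u]"]) auto
next
  case (step w x)
  then obtain xs where xs: "xs \<noteq> []" "hd xs = u" "last xs = w" "distinct xs"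
    "successively (\<lambda>a b. {a,b}\<in>F) xs" by blast
  show ?case
  proof (cases "x \<in> set xs")
    case True
    then obtain ys zs where yz: "xs = ys @ x # zs" by (meson split_list)
    have "successively (\<lambda>a b. {a,b}\<in>F) (ys @ [x])"
      using xs(5) unfolding yz by (auto simp: successively_append_iff successively_Cons)
    moreover have "hd (ys @ [x]) = u" using xs(2) yz by (cases ys) auto
    moreover have "distinct (ys @ [x])" using xs(4) yz by auto
    ultimately show ?thesis by (intro exI[of _ "ys @ [x]"]) auto
  next
    case False
    have "successively (\<lambda>a b. {a,b}\<in>F) (xs @ [x])"
      using xs step(2) by (auto simp: successively_append_iff)
    then show ?thesis using xs False by (intro exI[of _ "xs @ [x]"]) auto
  qed
qed

lemma cycle_from_path:
  assumes "xs \<noteq> []" "hd xs = u" "last xs = v" "distinct xs"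
    "successively (\<lambda>a b. {a,b}\<in>F) xs" "u \<noteq> v" "{u,v} \<notin> F"
  shows "\<not> acyc (insert {u,v} F)"
proof -
  let ?n = "length xs"
  have n2: "?n \<ge> 2"
  proof (rule ccontr)
    assume "\<not> ?n \<ge> 2"
    moreover have "?n \<noteq> 0" using assms(1) by simp
    ultimately have "?n = 1" by linarith
    then have "hd xs = last xs" using assms(1) by (cases xs) auto
    then show False using assms by auto
  qed
  have n3: "?n \<ge> 3"
  proof (rule ccontr)
    assume "\<not> ?n \<ge> 3"
    then have "?n = 2" using n2 by auto
    then have "xs = [xs!0, xs!1]"
      by (cases xs; cases "tl xs") auto
    moreover have "xs!0 = u" using assms(1,2) by (simp add: hd_conv_nth)
    moreover have "xs!1 = v" using assms(1,3) \<open>?n = 2\<close> by (simp add: last_conv_nth)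
    moreover have "{xs!0, xs!1} \<in> F" using succ_nth[OF assms(5), of 0] \<open>?n = 2\<close> by simp
    ultimately show False using assms by auto
  qed
  have "\<forall>i<?n. {xs!i, xs!((i+1) mod ?n)} \<in> insert {u,v} F"
  proof (intro allI impI)
    fix i assume i: "i < ?n"
    show "{xs!i, xs!((i+1) mod ?n)} \<in> insert {u,v} F"
    proof (cases "Suc i < ?n")
      case True
      then show ?thesis using succ_nth[OF assms(5) True] by simp
    next
      case False
      then have "i = ?n - 1" using i by auto
      moreover have "Suc i = ?n" using False i by auto
      then have "(i+1) mod ?n = 0" by simp
      moreover have "xs ! (?n - 1) = v" using assms(1,3) by (simp add: last_conv_nth)
      moreover have "xs ! 0 = u" using assms(1,2) by (simp add: hd_conv_nth)
      ultimately show ?thesis by (simp add: insert_commute)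
    qed
  qed
  then show ?thesis unfolding acyc_def using n3 assms(4) by blast
qed

lemma acyc_mono: "acyc G \<Longrightarrow> F \<subseteq> G \<Longrightarrow> acyc F"
  unfolding acyc_def by blast

lemma forest_balanced:
  assumes "finite F" "\<forall>e\<in>F. \<exists>u v. e = {u,v} \<and> u \<noteq> v" "acyc F"
  shows "\<exists>p :: 'a \<Rightarrow> bool. \<forall>u v. {u,v} \<in> F \<longrightarrow> ({u,v} \<in> S \<longleftrightarrow> p u \<noteq> p v)"
  using assms
proof (induction F rule: finite_induct)
  case empty
  then show ?case by auto
next
  case (insert e F)
  have aF: "acyc F" using insert.prems(2) acyc_mono[of "insert e F" F] by blast
  have eF: "\<forall>e\<in>F. \<exists>u v. e = {u,v} \<and> u \<noteq> v" using insert.prems(1) by blast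
  obtain p :: "'a \<Rightarrow> bool" where p: "\<forall>u v. {u,v} \<in> F \<longrightarrow> ({u,v} \<in> S \<longleftrightarrow> p u \<noteq> p v)"
    using insert.IH[OF eF aF] by blast
  obtain u v where e: "e = {u,v}" "u \<noteq> v" using insert.prems(1) by blast
  show ?case
  proof (cases "{u,v} \<in> S \<longleftrightarrow> p u \<noteq> p v")
    case True
    have "\<forall>a b. {a,b} \<in> insert e F \<longrightarrow> ({a,b} \<in> S \<longleftrightarrow> p a \<noteq> p b)"
    proof (intro allI impI)
      fix a b assume ab: "{a,b} \<in> insert e F"
      show "{a,b} \<in> S \<longleftrightarrow> p a \<noteq> p b"
      proof (cases "{a,b} = e")
        case c: True
        then have "(a = u \<and> b = v) \<or> (a = v \<and> b = u)" using e by (auto simp: doubleton_eq_iff)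
        then show ?thesis
        proof
          assume "a = u \<and> b = v" then show ?thesis using True by simp
        next
          assume "a = v \<and> b = u" then show ?thesis using True by (cases "p u"; cases "p v"; simp add: insert_commute)
        qed
      next
        case False
        then have "{a,b} \<in> F" using ab by simp
        then show ?thesis using p by blast
      qed
    qed
    then show ?thesis by blast
  next
    case False
    let ?R = "(\<lambda>a b. {a,b} \<in> F)\<^sup>*\<^sup>*"
    define q where "q w = (if ?R u w then \<not> p w else p w)" for w
    have nv: "\<not> ?R u v"
    proof
      assume "?R u v"
      then obtain xs where xs: "xs \<noteq> []" "hd xs = u" "last xs = v" "distinct xs"
        "successively (\<lambda>a b. {a,b}\<in>F) xs" using path_exists[of F u v] by blast
      have "{u,v} \<notin> F" using insert.hyps(2) e(1) by simp
      then have "\<not> acyc (insert {u,v} F)" using cycle_from_path[OF xs e(2)] by blast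
      then show False using insert.prems(2) e(1) by simp
    qed
    have ru: "?R u u" by (rule rtranclp.rtrancl_refl)
    have qu: "q u = (\<not> p u)" using ru unfolding q_def by simp
    have qv: "q v = p v" using nv unfolding q_def by simp
    have sym: "?R a b \<longleftrightarrow> ?R a b'" if "{b,b'} \<in> F" for a b b'
    proof -
      have "{b',b} \<in> F" using that by (simp add: insert_commute)
      show ?thesis
      proof
        assume "?R a b" then show "?R a b'" using that by (rule rtranclp.rtrancl_into_rtrancl)
      next
        assume "?R a b'" then show "?R a b" using \<open>{b',b} \<in> F\<close> by (rule rtranclp.rtrancl_into_rtrancl)
      qed
    qed
    have "\<forall>a b. {a,b} \<in> insert e F \<longrightarrow> ({a,b} \<in> S \<longleftrightarrow> q a \<noteq> q b)"
    proof (intro allI impI)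
      fix a b assume ab: "{a,b} \<in> insert e F"
      show "{a,b} \<in> S \<longleftrightarrow> q a \<noteq> q b"
      proof (cases "{a,b} = e")
        case True
        then have "(a = u \<and> b = v) \<or> (a = v \<and> b = u)" using e by (auto simp: doubleton_eq_iff)
        then show ?thesis
        proof
          assume "a = u \<and> b = v" then show ?thesis using False qu qv by simp
        next
          assume "a = v \<and> b = u" then show ?thesis using False qu qv by (cases "p u"; cases "p v"; simp add: insert_commute)
        qed
      next
        case False
        then have ab': "{a,b} \<in> F" using ab by simp
        have "?R u a \<longleftrightarrow> ?R u b" using sym[OF ab'] .
        then show ?thesis using p ab' unfolding q_def by (cases "?R u a") auto
      qed
    qed
    then show ?thesis by blast
  qed
qed


lemma resign_mem: "e \<in> E \<Longrightarrow> e \<in> resign E S X \<longleftrightarrow> (e \<in> S) \<noteq> (card (e \<inter> X) = 1)"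
  unfolding resign_def Let_def by blast
lemma card2: "u \<noteq> v \<Longrightarrow> card ({u,v} \<inter> X) = 1 \<longleftrightarrow> (u \<in> X) \<noteq> (v \<in> X)"
  by (cases "u \<in> X"; cases "v \<in> X") (auto simp: Int_insert_left)
lemma resign_empty: "resign E S {} = S"
  unfolding resign_def Let_def by simp

lemma main_sig:
  fixes V :: "'a set" and E :: "'a set set" and k :: nat and c :: "'a \<Rightarrow> nat"
  assumes G: "graph V E" and k2: "k \<ge> 2" and AC: "acyclic_coloring V E k c" and SE: "\<Sigma> \<subseteq> E"
  shows "chi_s_sig V E \<Sigma> \<le> k * 2 ^ (k - 2)"
proof -
  have Vfin: "finite V" using G unfolding graph_def by blast
  have Eedge: "\<forall>e\<in>E. \<exists>u v. e = {u,v} \<and> u \<noteq> v \<and> u \<in> V \<and> v \<in> V"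
    using G unfolding graph_def by blast
  have inV: "u \<in> V \<and> v \<in> V" if uvE: "{u,v} \<in> E" for u v
  proof -
    obtain a b where ab: "{u,v} = {a,b}" "a \<in> V" "b \<in> V" using bspec[OF Eedge uvE] by blast
    have "u \<in> {a,b}" "v \<in> {a,b}" using ab(1) by (metis insertI1, metis insertI1 insertI2)
    then show ?thesis using ab by blast
  qed
  have neq: "u \<noteq> v" if uvE: "{u,v} \<in> E" for u v
  proof -
    obtain a b where ab: "{u,v} = {a,b}" "a \<noteq> b" using bspec[OF Eedge uvE] by blast
    then show ?thesis by (auto simp: doubleton_eq_iff)
  qed
  have Efin: "finite E"
  proof -
    have "E \<subseteq> Pow V"
    proof
      fix e assume "e \<in> E"
      then obtain a b where "e = {a,b}" "a \<in> V" "b \<in> V" using bspec[OF Eedge] by blast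
      then show "e \<in> Pow V" by simp
    qed
    then show ?thesis using Vfin by (meson finite_Pow_iff finite_subset)
  qed
  have ck: "\<forall>v\<in>V. c v < k" and cp: "\<And>u v. {u,v} \<in> E \<Longrightarrow> c u \<noteq> c v"
    and cyc: "\<And>cs. is_cycle V E cs \<Longrightarrow> card (c ` set cs) \<ge> 3"
    using AC unfolding acyclic_coloring_def by blast+
  define Fp where "Fp i j = {e\<in>E. \<exists>u v. e = {u,v} \<and> c u = i \<and> c v = j}" for i j
  have acF: "acyc (Fp i j)" for i j
    unfolding acyc_def
  proof
    assume "\<exists>cs. length cs \<ge> 3 \<and> distinct cs \<and> (\<forall>m<length cs. {cs!m, cs!((m+1) mod length cs)} \<in> Fp i j)"
    then obtain cs where cs: "length cs \<ge> 3" "distinct cs"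
      "\<forall>m<length cs. {cs!m, cs!((m+1) mod length cs)} \<in> Fp i j" by (elim exE conjE) simp
    have mem: "x \<in> V \<and> c x \<in> {i,j}" if xin: "x \<in> set cs" for x
    proof -
      obtain m where m: "m < length cs" "x = cs!m" using xin by (auto simp: in_set_conv_nth)
      have "{cs!m, cs!((m+1) mod length cs)} \<in> Fp i j" using cs(3) m(1) by simp
      then obtain u v where uv: "{cs!m, cs!((m+1) mod length cs)} = {u,v}" "{u,v} \<in> E" "c u = i" "c v = j"
        unfolding Fp_def by auto
      have "x \<in> {u,v}" unfolding m(2) uv(1)[symmetric] by simp
      then show ?thesis using inV[OF uv(2)] uv(3,4) by auto
    qed
    have "set cs \<subseteq> V" using mem by blast
    moreover have "\<forall>m<length cs. {cs!m, cs!((m+1) mod length cs)} \<in> E"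
      using cs(3) unfolding Fp_def by blast
    ultimately have "is_cycle V E cs" unfolding is_cycle_def using cs(1,2) by blast
    then have "card (c ` set cs) \<ge> 3" by (rule cyc)
    moreover have "card (c ` set cs) \<le> 2"
    proof -
      have "c ` set cs \<subseteq> {i,j}" using mem by blast
      then have "card (c ` set cs) \<le> card {i,j}" by (intro card_mono) auto
      also have "\<dots> \<le> 2" by (simp add: card_insert_if)
      finally show ?thesis .
    qed
    ultimately show False by simp
  qed
  have balF: "\<exists>p :: 'a \<Rightarrow> bool. \<forall>u v. {u,v} \<in> Fp i j \<longrightarrow> ({u,v} \<in> \<Sigma> \<longleftrightarrow> p u \<noteq> p v)" for i j
  proof (rule forest_balanced)
    show "finite (Fp i j)" using Efin unfolding Fp_def by simp
    show "\<forall>e\<in>Fp i j. \<exists>u v. e = {u,v} \<and> u \<noteq> v"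
    proof
      fix e assume "e \<in> Fp i j"
      then have "e \<in> E" unfolding Fp_def by simp
      then obtain a b where "e = {a,b}" "a \<noteq> b" using bspec[OF Eedge] by blast
      then show "\<exists>u v. e = {u,v} \<and> u \<noteq> v" by blast
    qed
    show "acyc (Fp i j)" by (rule acF)
  qed
  define pp where "pp i j = (SOME p :: 'a \<Rightarrow> bool. \<forall>u v. {u,v} \<in> Fp i j \<longrightarrow> ({u,v} \<in> \<Sigma> \<longleftrightarrow> p u \<noteq> p v))" for i j
  have pp: "\<forall>u v. {u,v} \<in> Fp i j \<longrightarrow> ({u,v} \<in> \<Sigma> \<longleftrightarrow> pp i j u \<noteq> pp i j v)" for i j
    unfolding pp_def by (rule someI_ex[OF balF])
  define q where "q i j = pp (min i j) (max i j)" for i j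
  have qsym: "q i j = q j i" for i j unfolding q_def by (simp add: min.commute max.commute)
  have qsig: "{u,v} \<in> \<Sigma> \<longleftrightarrow> q (c u) (c v) u \<noteq> q (c u) (c v) v" if uv: "{u,v} \<in> E" for u v
  proof (cases "c u \<le> c v")
    case True
    have "{u,v} \<in> Fp (c u) (c v)" using uv unfolding Fp_def by auto
    then show ?thesis using pp[of "c u" "c v"] True unfolding q_def by simp
  next
    case False
    have vu: "{v,u} = {u,v}" by (rule insert_commute)
    have "{v,u} \<in> Fp (c v) (c u)" using uv unfolding Fp_def vu by auto
    then have "{v,u} \<in> \<Sigma> \<longleftrightarrow> pp (c v) (c u) v \<noteq> pp (c v) (c u) u" using pp by blast
    then have "{u,v} \<in> \<Sigma> \<longleftrightarrow> pp (c v) (c u) u \<noteq> pp (c v) (c u) v" unfolding vu by blast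
    moreover have "q (c u) (c v) = pp (c v) (c u)" using False unfolding q_def by simp
    ultimately show ?thesis by simp
  qed
  define j0 :: "nat \<Rightarrow> nat" where "j0 i = (if i = 0 then 1 else (0::nat))" for i
  define X where "X = {v\<in>V. q (c v) (j0 (c v)) v}"
  define b where "b w j = (q (c w) j w \<noteq> (w \<in> X))" for w j
  define \<Sigma>' where "\<Sigma>' = resign E \<Sigma> X"
  have S'E: "\<Sigma>' \<subseteq> E" using SE unfolding \<Sigma>'_def resign_def Let_def by blast
  have sig': "{u,v} \<in> \<Sigma>' \<longleftrightarrow> b u (c v) \<noteq> b v (c u)" if uv: "{u,v} \<in> E" for u v
  proof -
    have "u \<noteq> v" using neq uv .
    then have cardX: "card ({u,v} \<inter> X) = 1 \<longleftrightarrow> (u \<in> X) \<noteq> (v \<in> X)"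
      by (rule card2)
    have "{u,v} \<in> \<Sigma>' \<longleftrightarrow> ({u,v} \<in> \<Sigma>) \<noteq> (card ({u,v} \<inter> X) = 1)"
      unfolding \<Sigma>'_def by (rule resign_mem[OF uv])
    also have "\<dots> \<longleftrightarrow> (q (c u) (c v) u \<noteq> q (c u) (c v) v) \<noteq> ((u \<in> X) \<noteq> (v \<in> X))"
      using qsig[OF uv] cardX by simp
    also have "\<dots> \<longleftrightarrow> b u (c v) \<noteq> b v (c u)"
      unfolding b_def using qsym[of "c u" "c v"] by auto
    finally show ?thesis .
  qed
  define A where "A v = {j \<in> {0..<k} - {c v, j0 (c v)}. b v j}" for v
  have Ab: "j \<in> A v \<longleftrightarrow> b v j" if "v \<in> V" "j < k" "j \<noteq> c v" for v j
  proof (cases "j = j0 (c v)")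
    case True
    have "\<not> b v j" using that True unfolding b_def X_def by auto
    then show ?thesis unfolding A_def by auto
  next
    case False
    then show ?thesis using that unfolding A_def by auto
  qed
  have sigA: "{u,v} \<in> \<Sigma>' \<longleftrightarrow> (c v \<in> A u) \<noteq> (c u \<in> A v)" if uv: "{u,v} \<in> E" for u v
  proof -
    have "u \<in> V" "v \<in> V" using inV[OF uv] by auto
    moreover have "c u \<noteq> c v" using cp[OF uv] .
    ultimately have "c v \<in> A u \<longleftrightarrow> b u (c v)" "c u \<in> A v \<longleftrightarrow> b v (c u)"
      using Ab ck by auto
    then show ?thesis using sig'[OF uv] by simp
  qed
  define D where "D = (SIGMA i:{0..<k}. Pow ({0..<k} - {i, j0 i}))"
  have j0k: "j0 i < k" "j0 i \<noteq> i" for i using k2 unfolding j0_def by auto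
  have cardD: "card D = k * 2 ^ (k - 2)"
  proof -
    have "card (Pow ({0..<k} - {i, j0 i})) = 2 ^ (k - 2)" if "i \<in> {0..<k}" for i
    proof -
      have sub: "{i, j0 i} \<subseteq> {0..<k}" using that j0k by auto
      have "card {i, j0 i} = 2" using j0k(2)[of i] by auto
      then have "card ({0..<k} - {i, j0 i}) = k - 2" using card_Diff_subset[OF _ sub] by simp
      then show ?thesis by (simp add: card_Pow)
    qed
    note cP = this
    have "card D = (\<Sum>i\<in>{0..<k}. card (Pow ({0..<k} - {i, j0 i})))" unfolding D_def by simp
    also have "\<dots> = (\<Sum>i\<in>{0..<k}. 2 ^ (k - 2))" by (rule sum.cong) (auto simp: cP)
    finally show ?thesis by simp
  qed
  have Dfin: "finite D" unfolding D_def by auto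
  obtain h where h: "bij_betw h D {0..<card D}" using ex_bij_betw_finite_nat[OF Dfin] by blast
  have hinj: "inj_on h D" using h bij_betw_def by blast
  have inD: "(c v, A v) \<in> D" if "v \<in> V" for v
    using that ck unfolding D_def A_def by auto
  define f where "f v = h (c v, A v)" for v
  have finj: "f u = f v \<longleftrightarrow> c u = c v \<and> A u = A v" if "u \<in> V" "v \<in> V" for u v
    using inj_onD[OF hinj _ inD[OF that(1)] inD[OF that(2)]] unfolding f_def by auto
  define VH where "VH = f ` V"
  define EH where "EH = {{f u, f v} | u v. {u,v} \<in> E}"
  define SH where "SH = {{f u, f v} | u v. {u,v} \<in> \<Sigma>'}"
  have gH: "graph VH EH"
    unfolding graph_def
  proof
    show "finite VH" unfolding VH_def using Vfin by simp
    show "\<forall>e\<in>EH. \<exists>x y. e = {x,y} \<and> x \<noteq> y \<and> x \<in> VH \<and> y \<in> VH"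
    proof
      fix e assume "e \<in> EH"
      then obtain u v where uv: "e = {f u, f v}" "{u,v} \<in> E" unfolding EH_def by blast
      have "u \<in> V" "v \<in> V" using inV[OF uv(2)] by auto
      moreover have "f u \<noteq> f v" using finj[OF \<open>u \<in> V\<close> \<open>v \<in> V\<close>] cp[OF uv(2)] by simp
      ultimately show "\<exists>x y. e = {x,y} \<and> x \<noteq> y \<and> x \<in> VH \<and> y \<in> VH"
        using uv(1) unfolding VH_def by blast
    qed
  qed
  have SHEH: "SH \<subseteq> EH" using S'E unfolding SH_def EH_def by blast
  have cardVH: "card VH \<le> k * 2 ^ (k - 2)"
  proof -
    have "VH \<subseteq> {0..<card D}" unfolding VH_def f_def
      using inD h unfolding bij_betw_def by blast
    then have "card VH \<le> card {0..<card D}" by (intro card_mono) auto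
    then show ?thesis using cardD by simp
  qed
  have hom: "signified_hom V E \<Sigma>' VH EH SH f"
    unfolding signified_hom_def
  proof (intro conjI allI impI)
    show "\<forall>v\<in>V. f v \<in> VH" unfolding VH_def by blast
    fix u v assume uv: "{u,v} \<in> E"
    show "{f u, f v} \<in> EH" unfolding EH_def using uv by blast
    show "{u,v} \<in> \<Sigma>' \<longleftrightarrow> {f u, f v} \<in> SH"
    proof
      assume "{u,v} \<in> \<Sigma>'" then show "{f u, f v} \<in> SH" unfolding SH_def by blast
    next
      assume "{f u, f v} \<in> SH"
      then obtain u' v' where uv': "{f u, f v} = {f u', f v'}" "{u',v'} \<in> \<Sigma>'" unfolding SH_def by blast
      have uv'E: "{u',v'} \<in> E" using uv'(2) S'E by blast
      have V4: "u \<in> V" "v \<in> V" "u' \<in> V" "v' \<in> V" using inV[OF uv] inV[OF uv'E] by auto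
      have "(f u = f u' \<and> f v = f v') \<or> (f u = f v' \<and> f v = f u')" using uv'(1) by (auto simp: doubleton_eq_iff)
      then show "{u,v} \<in> \<Sigma>'"
      proof
        assume "f u = f u' \<and> f v = f v'"
        then have "c u = c u'" "A u = A u'" "c v = c v'" "A v = A v'" using finj V4 by auto
        then show ?thesis using sigA[OF uv] sigA[OF uv'E] uv'(2) by simp
      next
        assume "f u = f v' \<and> f v = f u'"
        then have "c u = c v'" "A u = A v'" "c v = c u'" "A v = A u'" using finj V4 by auto
        then show ?thesis using sigA[OF uv] sigA[OF uv'E] uv'(2) by auto
      qed
    qed
  qed
  have XV: "X \<subseteq> V" unfolding X_def by auto
  have eq1: "sig_equiv V E \<Sigma> \<Sigma>'" unfolding sig_equiv_def \<Sigma>'_def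
    by (rule exI[of _ X]) (simp add: XV)
  have eq2: "sig_equiv VH EH SH SH" unfolding sig_equiv_def
    by (rule exI[of _ "{}"]) (simp add: resign_empty)
  have "signed_hom V E \<Sigma> VH EH SH" unfolding signed_hom_def
    by (intro exI[of _ \<Sigma>'] exI[of _ SH] exI[of _ f] conjI eq1 eq2 hom)
  then have P: "\<exists>(VH' :: nat set) EH' SH'. graph VH' EH' \<and> SH' \<subseteq> EH' \<and> card VH' = card VH \<and> signed_hom V E \<Sigma> VH' EH' SH'"
    by (intro exI[of _ VH] exI[of _ EH] exI[of _ SH] conjI gH SHEH refl)
  have "chi_s_sig V E \<Sigma> \<le> card VH" unfolding chi_s_sig_def by (rule Least_le) (rule P)
  then show ?thesis using cardVH by simp
qed

theorem mainTheorem16: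
  fixes V :: "'a set" and E :: "'a set set" and k :: nat and c :: "'a \<Rightarrow> nat"
  assumes "graph V E"
    and "k \<ge> 2"
    and "acyclic_coloring V E k c"
  shows "chi_s V E \<le> k * 2 ^ (k - 2)"
proof -
  have Vfin: "finite V" using assms(1) unfolding graph_def by blast
  have Eedge: "\<forall>e\<in>E. \<exists>u v. e = {u,v} \<and> u \<noteq> v \<and> u \<in> V \<and> v \<in> V"
    using assms(1) unfolding graph_def by blast
  have "E \<subseteq> Pow V"
  proof
    fix e assume "e \<in> E"
    then obtain a b where "e = {a,b}" "a \<in> V" "b \<in> V" using bspec[OF Eedge] by blast
    then show "e \<in> Pow V" by simp
  qed
  then have Efin: "finite E" using Vfin by (meson finite_Pow_iff finite_subset)
  have eq: "{chi_s_sig V E \<Sigma> | \<Sigma>. \<Sigma> \<subseteq> E} = chi_s_sig V E ` Pow E" by auto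
  show ?thesis unfolding chi_s_def eq
  proof (rule Max.boundedI)
    show "finite (chi_s_sig V E ` Pow E)" using Efin by simp
    show "chi_s_sig V E ` Pow E \<noteq> {}" by blast
    show "\<And>a. a \<in> chi_s_sig V E ` Pow E \<Longrightarrow> a \<le> k * 2 ^ (k - 2)"
      using main_sig[OF assms] by blast
  qed
qed

end
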